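(* Let $k\geq 1$ be an integer and let $G$ be a connected graph with $G=G_1\bigoplus_k G_2$ (a $k$-clique-sum of $G_1$ and $G_2$ along a vertex set $S'$ with $|S'|=k$). Then: (1) $G_i$ is connected for each $i\in\{1,2\}$; (2) for each $i\in\{1,2\}$ and every $S\subseteq V(G_i)$, $\omega(G_i-S)\leq \omega(G-S)$; (3) if $G_i\not\cong K_k$ for each $i\in\{1,2\}$, then $S'$ is a vertex-cut of $G$.
   Context: $\omega(H)$ denotes the number of components of a graph $H$. If $H$ is a simple graph with induced subgraphs $H_1,H_2$ and $S\subseteq V(H)$ such that $V(H)=V(H_1)\cup V(H_2)$, $E(H)=E(H_1)\cup E(H_2)$ and $S=V(H_1)\cap V(H_2)$, then $H$ is obtained by pasting $H_1$ and $H_2$ along $S$. A graph $G$ is a $k$-clique-sum of $G_1$ and $G_2$, written $G_1\bigoplus_k G_2$, if $G$ is obtained by pasting together two graphs $G_1'$ and $G_2'$ along a set $S'$ of order $k$, and for each $i\in\{1,2\}$, $G_i$ is obtained from $G_i'$ by extending $G_i'[S']$ to a clique of order $k$ (so $V(G_i)=V(G_i')\subseteq V(G)$). $S'$ is called the vertex set with respect to the clique-sum. A vertex-cut is a set of vertices whose removal increases the number of components. *)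

theory Defs
  imports Main
begin

record 'a sgraph =
  verts :: "'a set"
  edges :: "'a set set"

definition sgraph :: "('a, 'b) sgraph_scheme \<Rightarrow> bool" where
  "sgraph G \<longleftrightarrow> finite (verts G) \<and>
     (\<forall>e\<in>edges G. \<exists>u v. e = {u, v} \<and> u \<noteq> v \<and> u \<in> verts G \<and> v \<in> verts G)"

definition adj :: "'a sgraph \<Rightarrow> 'a \<Rightarrow> 'a \<Rightarrow> bool" where
  "adj G u v \<longleftrightarrow> {u, v} \<in> edges G"

definition reachable :: "'a sgraph \<Rightarrow> 'a \<Rightarrow> 'a \<Rightarrow> bool" where
  "reachable G u v \<longleftrightarrow> u \<in> verts G \<and> (adj G)\<^sup>*\<^sup>* u v"

definition components :: "'a sgraph \<Rightarrow> 'a set set" where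
  "components G = {{v \<in> verts G. reachable G u v} | u. u \<in> verts G}"

text \<open>\<open>\<omega>(H)\<close>: the number of components of H.\<close>
definition num_components :: "'a sgraph \<Rightarrow> nat" where
  "num_components G = card (components G)"

definition connected :: "'a sgraph \<Rightarrow> bool" where
  "connected G \<longleftrightarrow> verts G \<noteq> {} \<and> (\<forall>u\<in>verts G. \<forall>v\<in>verts G. reachable G u v)"

definition delete_verts :: "'a sgraph \<Rightarrow> 'a set \<Rightarrow> 'a sgraph" where
  "delete_verts G S = \<lparr>verts = verts G - S, edges = {e \<in> edges G. e \<inter> S = {}}\<rparr>"

definition induced_subgraph :: "'a sgraph \<Rightarrow> 'a sgraph \<Rightarrow> bool" where
  "induced_subgraph H G \<longleftrightarrow> verts H \<subseteq> verts G \<and> edges H = {e \<in> edges G. e \<subseteq> verts H}"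

definition pasting :: "'a sgraph \<Rightarrow> 'a sgraph \<Rightarrow> 'a sgraph \<Rightarrow> 'a set \<Rightarrow> bool" where
  "pasting H H1 H2 S \<longleftrightarrow> induced_subgraph H1 H \<and> induced_subgraph H2 H \<and>
     verts H = verts H1 \<union> verts H2 \<and> edges H = edges H1 \<union> edges H2 \<and> S = verts H1 \<inter> verts H2"

definition clique_edges :: "'a set \<Rightarrow> 'a set set" where
  "clique_edges S = {{u, v} | u v. u \<in> S \<and> v \<in> S \<and> u \<noteq> v}"

definition complete_on :: "'a sgraph \<Rightarrow> 'a set \<Rightarrow> 'a sgraph" where
  "complete_on H S = \<lparr>verts = verts H, edges = edges H \<union> clique_edges S\<rparr>"

definition clique_sum :: "nat \<Rightarrow> 'a sgraph \<Rightarrow> 'a sgraph \<Rightarrow> 'a sgraph \<Rightarrow> 'a set \<Rightarrow> bool" where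
  "clique_sum k G G1 G2 S' \<longleftrightarrow> card S' = k \<and>
     (\<exists>G1' G2'. pasting G G1' G2' S' \<and> G1 = complete_on G1' S' \<and> G2 = complete_on G2' S')"

definition vertex_cut :: "'a sgraph \<Rightarrow> 'a set \<Rightarrow> bool" where
  "vertex_cut G S \<longleftrightarrow> S \<subseteq> verts G \<and> num_components (delete_verts G S) > num_components G"

definition graph_iso :: "'a sgraph \<Rightarrow> 'b sgraph \<Rightarrow> bool" where
  "graph_iso G H \<longleftrightarrow> (\<exists>f. bij_betw f (verts G) (verts H) \<and>
     (\<forall>u\<in>verts G. \<forall>v\<in>verts G. {u, v} \<in> edges G \<longleftrightarrow> {f u, f v} \<in> edges H))"

definition complete_graph :: "nat \<Rightarrow> nat sgraph" where
  "complete_graph k = \<lparr>verts = {0..<k}, edges = clique_edges {0..<k}\<rparr>"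

end

theory Submission
  imports Defs
begin
definition vcomp :: "'a sgraph \<Rightarrow> 'a \<Rightarrow> 'a set" where
  "vcomp H u = {v \<in> verts H. reachable H u v}"

lemma components_eq: "components H = vcomp H ` verts H"
  unfolding components_def vcomp_def by auto

lemma adj_sym: "adj H x y \<Longrightarrow> adj H y x"
  unfolding adj_def by (simp add: insert_commute)

lemma adj_verts: "sgraph H \<Longrightarrow> adj H x y \<Longrightarrow> x \<in> verts H \<and> y \<in> verts H \<and> x \<noteq> y"
  unfolding adj_def sgraph_def by (force simp: doubleton_eq_iff)

lemma rtr_sym: "(adj H)\<^sup>*\<^sup>* u v \<Longrightarrow> (adj H)\<^sup>*\<^sup>* v u"
proof (induction rule: rtranclp.induct)
  case (rtrancl_refl a) then show ?case by simp
next
  case (rtrancl_into_rtrancl a b c)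
  then show ?case by (meson adj_sym converse_rtranclp_into_rtranclp)
qed

lemma rtr_verts: "(adj H)\<^sup>*\<^sup>* u v \<Longrightarrow> sgraph H \<Longrightarrow> u \<in> verts H \<Longrightarrow> v \<in> verts H"
  by (induction rule: rtranclp.induct) (auto dest: adj_verts)

lemma reach_verts: "sgraph H \<Longrightarrow> reachable H u v \<Longrightarrow> v \<in> verts H"
  using rtr_verts[of H u v] unfolding reachable_def by simp

lemma reach_sym: "sgraph H \<Longrightarrow> reachable H u v \<Longrightarrow> reachable H v u"
  using rtr_verts[of H u v] rtr_sym[of H u v] unfolding reachable_def by simp

lemma reach_trans: "reachable H u v \<Longrightarrow> reachable H v w \<Longrightarrow> reachable H u w"
  unfolding reachable_def by auto

lemma reach_refl: "u \<in> verts H \<Longrightarrow> reachable H u u"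
  unfolding reachable_def by auto

lemma vcomp_eq: "sgraph H \<Longrightarrow> reachable H u v \<Longrightarrow> vcomp H u = vcomp H v"
proof -
  assume sg: "sgraph H" and r: "reachable H u v"
  have r': "reachable H v u" using reach_sym[OF sg r] .
  have "reachable H u w \<longleftrightarrow> reachable H v w" for w
    using reach_trans[OF r, of w] reach_trans[OF r', of w] by blast
  then show ?thesis unfolding vcomp_def by simp
qed

lemma in_comp: "u \<in> verts H \<Longrightarrow> u \<in> vcomp H u"
  unfolding vcomp_def using reach_refl by auto

lemma rtranclp_map:
  assumes "\<And>x y. R x y \<Longrightarrow> R'\<^sup>*\<^sup>* (f x) (f y)"
  shows "R\<^sup>*\<^sup>* x y \<Longrightarrow> R'\<^sup>*\<^sup>* (f x) (f y)"
  by (induction rule: rtranclp.induct) (auto intro: rtranclp_trans assms)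

lemma lemA:
  assumes "sgraph H" "sgraph H'" "finite (verts H)"
    and "f ` verts H \<subseteq> verts H'" "verts H' \<subseteq> f ` verts H"
    and "\<And>u v. reachable H u v \<Longrightarrow> reachable H' (f u) (f v)"
  shows "num_components H' \<le> num_components H"
proof -
  define h where "h C = vcomp H' (f (SOME x. x \<in> C))" for C
  have hc: "h (vcomp H u) = vcomp H' (f u)" if "u \<in> verts H" for u
  proof -
    have "\<exists>x. x \<in> vcomp H u" using in_comp[OF that] by blast
    then have "(SOME x. x \<in> vcomp H u) \<in> vcomp H u" by (rule someI_ex)
    then have "reachable H u (SOME x. x \<in> vcomp H u)" unfolding vcomp_def by auto
    then have "reachable H' (f u) (f (SOME x. x \<in> vcomp H u))" using assms(6) by blast
    then show ?thesis unfolding h_def using vcomp_eq[OF assms(2)] by metis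
  qed
  have "f ` verts H = verts H'" using assms(4,5) by blast
  then have "components H' = (\<lambda>u. vcomp H' (f u)) ` verts H"
    unfolding components_eq using image_image[of "vcomp H'" f "verts H"] by simp
  also have "\<dots> = h ` components H" unfolding components_eq using hc by (auto simp: image_iff)
  finally have "components H' = h ` components H" .
  moreover have "finite (components H)" using assms(3) by (simp add: components_eq)
  ultimately show ?thesis unfolding num_components_def by (simp add: card_image_le)
qed

lemma lemB:
  assumes "sgraph H" "sgraph H''" "finite (verts H'')"
    and "verts H \<subseteq> verts H''"
    and "\<And>u v. u \<in> verts H \<Longrightarrow> reachable H'' u v \<Longrightarrow> v \<in> verts H \<Longrightarrow> reachable H u v"
    and "\<And>u v. reachable H u v \<Longrightarrow> reachable H'' u v"
  shows "num_components H \<le> num_components H''"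
proof -
  define h where "h C = vcomp H'' (SOME x. x \<in> C)" for C
  have hc: "h (vcomp H u) = vcomp H'' u" if "u \<in> verts H" for u
  proof -
    have "\<exists>x. x \<in> vcomp H u" using in_comp[OF that] by blast
    then have "(SOME x. x \<in> vcomp H u) \<in> vcomp H u" by (rule someI_ex)
    then have "reachable H u (SOME x. x \<in> vcomp H u)" unfolding vcomp_def by auto
    then have "reachable H'' u (SOME x. x \<in> vcomp H u)" using assms(6) by blast
    then show ?thesis unfolding h_def using vcomp_eq[OF assms(2)] by metis
  qed
  have inj: "inj_on h (components H)"
  proof (rule inj_onI)
    fix C D assume C: "C \<in> components H" and D: "D \<in> components H" and e: "h C = h D"
    obtain u where u: "u \<in> verts H" "C = vcomp H u" using C unfolding components_eq by blast
    obtain v where v: "v \<in> verts H" "D = vcomp H v" using D unfolding components_eq by blast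
    have "vcomp H'' u = vcomp H'' v" using e u v hc by simp
    moreover have "v \<in> vcomp H'' v" using in_comp[of v H''] v assms(4) by auto
    ultimately have "reachable H'' u v" unfolding vcomp_def by auto
    then have "reachable H u v" using assms(5)[of u v] u v by simp
    then show "C = D" using u v vcomp_eq[OF assms(1)] by simp
  qed
  have sub: "h ` components H \<subseteq> components H''"
  proof
    fix X assume "X \<in> h ` components H"
    then obtain u where u: "u \<in> verts H" "X = h (vcomp H u)" unfolding components_eq by blast
    then have "X = vcomp H'' u" using hc by simp
    then show "X \<in> components H''" using u assms(4) unfolding components_eq by blast
  qed
  have "finite (components H'')" using assms(3) by (simp add: components_eq)
  then show ?thesis unfolding num_components_def using card_inj_on_le[OF inj sub] by simp
qed

lemma adj_del: "adj (delete_verts G S) x y \<longleftrightarrow> adj G x y \<and> x \<notin> S \<and> y \<notin> S"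
  unfolding adj_def delete_verts_def by auto

lemma adj_del': "adj (delete_verts G S) x y \<longleftrightarrow> {x, y} \<in> edges G \<and> x \<notin> S \<and> y \<notin> S"
  unfolding adj_def delete_verts_def by auto

lemma verts_del[simp]: "verts (delete_verts G S) = verts G - S"
  unfolding delete_verts_def by simp

lemma sgraph_del: assumes "sgraph G" shows "sgraph (delete_verts G S)"
proof -
  have "\<exists>u v. e = {u,v} \<and> u \<noteq> v \<and> u \<in> verts G - S \<and> v \<in> verts G - S"
    if "e \<in> edges G" "e \<inter> S = {}" for e
  proof -
    have "\<forall>e\<in>edges G. \<exists>u v. e = {u, v} \<and> u \<noteq> v \<and> u \<in> verts G \<and> v \<in> verts G"
      using assms unfolding sgraph_def by (rule conjunct2)
    then have "\<exists>u v. e = {u, v} \<and> u \<noteq> v \<and> u \<in> verts G \<and> v \<in> verts G"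
      using that(1) by (rule bspec)
    then obtain u v where "e = {u,v}" "u \<noteq> v" "u \<in> verts G" "v \<in> verts G"
      by (elim exE conjE)
    then show ?thesis using that(2) by auto
  qed
  then show ?thesis using assms unfolding sgraph_def delete_verts_def by auto
qed

lemma del_empty: "adj (delete_verts G {}) = adj G"
  by (intro ext) (simp add: adj_del)

lemma clique_mem: "u \<in> T \<Longrightarrow> v \<in> T \<Longrightarrow> {u, v} \<in> clique_edges T \<longleftrightarrow> u \<noteq> v"
  unfolding clique_edges_def by (auto simp: doubleton_eq_iff)

lemma clique_sub: "e \<in> clique_edges T \<Longrightarrow> e \<subseteq> T"
  unfolding clique_edges_def by auto

lemma side:
  fixes G A B :: "'a sgraph"
  assumes sg: "sgraph G" and cn: "connected G" and p: "pasting G A B S'" and ne: "S' \<noteq> {}"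
  shows "connected (complete_on A S') \<and>
    (\<forall>S \<subseteq> verts (complete_on A S'). num_components (delete_verts (complete_on A S') S) \<le> num_components (delete_verts G S))
   \<and> (\<forall>S. S' \<subseteq> S \<longrightarrow> (\<forall>u v. u \<in> verts A - S \<longrightarrow> reachable (delete_verts G S) u v \<longrightarrow> v \<in> verts A))
   \<and> (finite S' \<and> verts A = S' \<longrightarrow> graph_iso (complete_on A S') (complete_graph (card S')))"
proof -
  define G1 where "G1 = complete_on A S'"
  have vG1: "verts G1 = verts A" unfolding G1_def complete_on_def by simp
  have eG1: "edges G1 = edges A \<union> clique_edges S'" unfolding G1_def complete_on_def by simp
  have F1: "e \<subseteq> verts A \<or> e \<subseteq> verts B" if "e \<in> edges G" for e
    using p that unfolding pasting_def induced_subgraph_def by blast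
  have F2: "e \<in> edges A" if "e \<in> edges G" "e \<subseteq> verts A" for e
    using p that unfolding pasting_def induced_subgraph_def by blast
  have F3: "edges A \<subseteq> edges G"
    using p unfolding pasting_def induced_subgraph_def by blast
  have SA: "S' \<subseteq> verts A" and SB: "S' \<subseteq> verts B" and SI: "S' = verts A \<inter> verts B"
    and VG: "verts G = verts A \<union> verts B"
    using p unfolding pasting_def by auto
  have F4: "e \<subseteq> verts A" if "e \<in> edges A" for e
    using p that unfolding pasting_def induced_subgraph_def by blast
  have sgA: "sgraph G1"
    unfolding sgraph_def eG1 vG1
  proof (intro conjI ballI)
    show "finite (verts A)" using sg VG unfolding sgraph_def by auto
  next
    fix e assume "e \<in> edges A \<union> clique_edges S'"
    then show "\<exists>u v. e = {u, v} \<and> u \<noteq> v \<and> u \<in> verts A \<and> v \<in> verts A"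
    proof
      assume e: "e \<in> edges A"
      then obtain u v where "e = {u, v}" "u \<noteq> v" using F3 sg unfolding sgraph_def by blast
      then show ?thesis using F4[OF e] by auto
    next
      assume "e \<in> clique_edges S'"
      then show ?thesis using SA unfolding clique_edges_def by blast
    qed
  qed
  have finG: "finite (verts G)" using sg sgraph_def by auto
  have proj: "reachable (delete_verts G1 S) (if u \<in> verts A then u else s0) (if v \<in> verts A then v else s0)"
    if s0: "s0 \<in> S'" "s0 \<notin> S" and r: "reachable (delete_verts G S) u v" for S s0 u v
  proof -
    define f where "f x = (if x \<in> verts A then x else s0)" for x
    have step: "(adj (delete_verts G1 S))\<^sup>*\<^sup>* (f x) (f y)" if a: "adj (delete_verts G S) x y" for x y
    proof -
      have e: "{x, y} \<in> edges G" "x \<notin> S" "y \<notin> S" using a unfolding adj_del' by auto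
      have xy: "x \<noteq> y" using adj_verts[OF sg] a adj_del by metis
      have "f x = f y \<or> adj (delete_verts G1 S) (f x) (f y)"
      proof (cases "x \<in> verts A"; cases "y \<in> verts A")
        assume "x \<in> verts A" "y \<in> verts A"
        then show ?thesis using F2[OF e(1)] e unfolding adj_del' f_def eG1 by auto
      next
        assume h: "x \<in> verts A" "y \<notin> verts A"
        then have "x \<in> S'" using F1[OF e(1)] SI by auto
        then show ?thesis using h s0 e clique_mem[of x S' s0] unfolding adj_del' f_def eG1 by auto
      next
        assume h: "x \<notin> verts A" "y \<in> verts A"
        then have "y \<in> S'" using F1[OF e(1)] SI by auto
        then show ?thesis using h s0 e clique_mem[of s0 S' y] unfolding adj_del' f_def eG1 by auto
      next
        assume h: "x \<notin> verts A" "y \<notin> verts A"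
        then show ?thesis unfolding f_def by auto
      qed
      then show ?thesis by auto
    qed
    have "(adj (delete_verts G1 S))\<^sup>*\<^sup>* (f u) (f v)"
      using rtranclp_map[of "adj (delete_verts G S)" "adj (delete_verts G1 S)" f, OF step] r
      unfolding reachable_def by blast
    moreover have "f u \<in> verts (delete_verts G1 S)" using r s0 SA VG vG1 unfolding reachable_def f_def by auto
    ultimately show ?thesis unfolding reachable_def f_def by simp
  qed
  have c1: "connected G1"
  proof -
    obtain s0 where s0: "s0 \<in> S'" using ne by auto
    have "reachable G1 u v" if "u \<in> verts G1" "v \<in> verts G1" for u v
    proof -
      have "reachable G u v" using cn that VG vG1 unfolding connected_def by auto
      then have "reachable (delete_verts G {}) u v" unfolding reachable_def del_empty by simp
      from proj[OF s0 _ this] show ?thesis using that vG1 unfolding reachable_def del_empty by simp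
    qed
    then show ?thesis using SA ne vG1 unfolding connected_def by auto
  qed
  have stay: "v \<in> verts A - S \<and> (adj (delete_verts G1 S))\<^sup>*\<^sup>* u v"
    if "(adj (delete_verts G S))\<^sup>*\<^sup>* u v" "S' \<subseteq> S" "u \<in> verts A - S" for S u v
    using that
  proof (induction rule: rtranclp.induct)
    case (rtrancl_refl a)
    then show ?case by simp
  next
    case (rtrancl_into_rtrancl a b c)
    then have b: "b \<in> verts A - S" "(adj (delete_verts G1 S))\<^sup>*\<^sup>* a b" by auto
    have e: "{b, c} \<in> edges G" "b \<notin> S" "c \<notin> S" using rtrancl_into_rtrancl(2) unfolding adj_del' by auto
    have "{b, c} \<subseteq> verts A"
    proof (rule ccontr)
      assume "\<not> ?thesis"
      then have "{b,c} \<subseteq> verts B" using F1[OF e(1)] by blast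
      then have "b \<in> S'" using b SI by auto
      then show False using b rtrancl_into_rtrancl(4) by auto
    qed
    then have "adj (delete_verts G1 S) b c" using F2[OF e(1)] e unfolding adj_del' eG1 by auto
    then show ?case using b \<open>{b, c} \<subseteq> verts A\<close> e by auto
  qed
  have c2: "num_components (delete_verts G1 S) \<le> num_components (delete_verts G S)"
    if S: "S \<subseteq> verts G1" for S
  proof (cases "S' \<subseteq> S")
    case True
    show ?thesis
    proof (rule lemB)
      show "sgraph (delete_verts G1 S)" using sgA sgraph_del by blast
      show "sgraph (delete_verts G S)" using sg sgraph_del by blast
      show "finite (verts (delete_verts G S))" using finG by simp
      show "verts (delete_verts G1 S) \<subseteq> verts (delete_verts G S)" using vG1 VG by auto
      show "reachable (delete_verts G1 S) u v"
        if "u \<in> verts (delete_verts G1 S)" "reachable (delete_verts G S) u v" for u v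
        using stay[of S u v] that True vG1 unfolding reachable_def by auto
      show "reachable (delete_verts G S) u v" if "reachable (delete_verts G1 S) u v" for u v
      proof -
        have "adj (delete_verts G S) x y" if "adj (delete_verts G1 S) x y" for x y
        proof -
          have h: "{x,y} \<in> edges G1" "x \<notin> S" "y \<notin> S" using that unfolding adj_del' by auto
          have "{x,y} \<notin> clique_edges S'" using clique_sub h(2) True by blast
          then show ?thesis using h F3 unfolding eG1 adj_del' by auto
        qed
        then have "(adj (delete_verts G S))\<^sup>*\<^sup>* u v"
          using that unfolding reachable_def by (metis mono_rtranclp)
        then show ?thesis using that vG1 VG unfolding reachable_def by auto
      qed
    qed
  next
    case False
    then obtain s0 where s0: "s0 \<in> S'" "s0 \<notin> S" by auto
    define f where "f x = (if x \<in> verts A then x else s0)" for x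
    show ?thesis
    proof (rule lemA[where f = f])
      show "sgraph (delete_verts G1 S)" using sgA sgraph_del by blast
      show "sgraph (delete_verts G S)" using sg sgraph_del by blast
      show "finite (verts (delete_verts G S))" using finG by simp
      show "f ` verts (delete_verts G S) \<subseteq> verts (delete_verts G1 S)"
        using s0 SA vG1 unfolding f_def by auto
      show "verts (delete_verts G1 S) \<subseteq> f ` verts (delete_verts G S)"
      proof
        fix x assume "x \<in> verts (delete_verts G1 S)"
        then have "x \<in> verts (delete_verts G S)" "f x = x" using vG1 VG unfolding f_def by auto
        then show "x \<in> f ` verts (delete_verts G S)" by force
      qed
      show "reachable (delete_verts G1 S) (f u) (f v)" if "reachable (delete_verts G S) u v" for u v
        using proj[OF s0 that] unfolding f_def .
    qed
  qed
  have c3: "\<forall>S. S' \<subseteq> S \<longrightarrow> (\<forall>u v. u \<in> verts A - S \<longrightarrow> reachable (delete_verts G S) u v \<longrightarrow> v \<in> verts A)"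
    using stay unfolding reachable_def by blast
  have c4: "graph_iso G1 (complete_graph (card S'))" if fin: "finite S'" and eq: "verts A = S'"
  proof -
    obtain g where g: "bij_betw g S' {0..<card S'}"
      using fin ex_bij_betw_finite_nat by blast
    have "{u, v} \<in> edges G1 \<longleftrightarrow> {g u, g v} \<in> edges (complete_graph (card S'))"
      if "u \<in> S'" "v \<in> S'" for u v
    proof -
      have "{u, v} \<in> edges G1 \<longleftrightarrow> u \<noteq> v"
      proof
        assume "{u, v} \<in> edges G1"
        then show "u \<noteq> v" using sgA unfolding sgraph_def by (force simp: doubleton_eq_iff)
      next
        assume "u \<noteq> v" then show "{u, v} \<in> edges G1" using clique_mem[OF that] eG1 by auto
      qed
      moreover have "g u \<in> {0..<card S'}" "g v \<in> {0..<card S'}" using g that bij_betwE by blast+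
      moreover have "g u = g v \<longleftrightarrow> u = v" using g that unfolding bij_betw_def inj_on_def by blast
      ultimately show ?thesis using clique_mem[of "g u" "{0..<card S'}" "g v"] unfolding complete_graph_def by auto
    qed
    then show ?thesis unfolding graph_iso_def complete_graph_def using g vG1 eq
      by (auto simp: complete_graph_def)
  qed
  show ?thesis using c1 c2 c3 c4 unfolding G1_def[symmetric] by blast
qed

theorem lemma2p1:
  fixes G G1 G2 :: "'a sgraph" and S' :: "'a set" and k :: nat
  assumes "k \<ge> 1"
    and "sgraph G"
    and "connected G"
    and "clique_sum k G G1 G2 S'"
  shows "(connected G1 \<and> connected G2)
    \<and> (\<forall>S \<subseteq> verts G1. num_components (delete_verts G1 S) \<le> num_components (delete_verts G S))
    \<and> (\<forall>S \<subseteq> verts G2. num_components (delete_verts G2 S) \<le> num_components (delete_verts G S))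
    \<and> (\<not> graph_iso G1 (complete_graph k) \<and> \<not> graph_iso G2 (complete_graph k)
           \<longrightarrow> vertex_cut G S')"
proof -
  obtain A B where p: "pasting G A B S'" and g1: "G1 = complete_on A S'" and g2: "G2 = complete_on B S'"
    and ck: "card S' = k"
    using assms(4) unfolding clique_sum_def by blast
  have fin: "finite S'" and ne: "S' \<noteq> {}" using ck assms(1) card_gt_0_iff[of S'] by auto
  have p2: "pasting G B A S'" using p unfolding pasting_def by blast
  note sA = side[OF assms(2,3) p ne]
  note sB = side[OF assms(2,3) p2 ne]
  have SA: "S' \<subseteq> verts A" and SB: "S' \<subseteq> verts B" and SI: "S' = verts A \<inter> verts B"
    and VG: "verts G = verts A \<union> verts B"
    using p unfolding pasting_def by auto
  have part3: "vertex_cut G S'"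
    if n1: "\<not> graph_iso G1 (complete_graph k)" and n2: "\<not> graph_iso G2 (complete_graph k)"
  proof -
    have "verts A \<noteq> S'" using n1 sA fin ck g1 by blast
    then obtain a where a: "a \<in> verts A" "a \<notin> S'" using SA by blast
    have "verts B \<noteq> S'" using n2 sB fin ck g2 by blast
    then obtain b where b: "b \<in> verts B" "b \<notin> S'" using SB by blast
    let ?H = "delete_verts G S'"
    have sgH: "sgraph ?H" using assms(2) sgraph_del by blast
    have ca: "vcomp ?H a \<in> components ?H" using a VG unfolding components_eq by auto
    have cb: "vcomp ?H b \<in> components ?H" using b VG unfolding components_eq by auto
    have "b \<in> vcomp ?H b" using b VG in_comp[of b ?H] by auto
    moreover have "b \<notin> vcomp ?H a"
    proof
      assume "b \<in> vcomp ?H a"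
      then have "reachable ?H a b" unfolding vcomp_def by auto
      then have "b \<in> verts A" using sA a by blast
      then show False using b SI by auto
    qed
    ultimately have neq: "vcomp ?H a \<noteq> vcomp ?H b" by auto
    have finH: "finite (components ?H)" using assms(2) unfolding sgraph_def components_eq by simp
    have "card {vcomp ?H a, vcomp ?H b} \<le> card (components ?H)"
      using ca cb finH by (intro card_mono) auto
    then have c2: "2 \<le> num_components ?H" using neq unfolding num_components_def by simp
    have "components G = {verts G}"
    proof -
      have "vcomp G u = verts G" if "u \<in> verts G" for u
        using assms(3) that unfolding connected_def vcomp_def by auto
      moreover have "verts G \<noteq> {}" using assms(3) unfolding connected_def by auto
      ultimately show ?thesis unfolding components_eq by auto
    qed
    then have "num_components G = 1" unfolding num_components_def by simp
    then show ?thesis unfolding vertex_cut_def using c2 SA VG by auto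
  qed
  have q1: "connected G1" using conjunct1[OF sA] g1 by simp
  have q2: "connected G2" using conjunct1[OF sB] g2 by simp
  have q3: "\<forall>S \<subseteq> verts G1. num_components (delete_verts G1 S) \<le> num_components (delete_verts G S)"
    using conjunct1[OF conjunct2[OF sA]] g1 by simp
  have q4: "\<forall>S \<subseteq> verts G2. num_components (delete_verts G2 S) \<le> num_components (delete_verts G S)"
    using conjunct1[OF conjunct2[OF sB]] g2 by simp
  show ?thesis using q1 q2 q3 q4 part3 by (intro conjI impI) auto
qed

end
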